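(* Let $K$ be a semifield and $P$ a polygon. Let $d_1,\dots,d_m$ be pairwise non-crossing internal diagonals of $P$ dividing $P$ into subpolygons $P_1,\dots,P_{m+1}$, let $D_i$ be a dissection of $P_i$, and set $D = \{d_1,\dots,d_m\} \cup D_1 \cup \dots \cup D_{m+1}$ (a dissection of $P$). Let $f_i : \operatorname{diag}(P_i) \to K$ be a weak frieze with respect to $D_i$ for each $i$, such that $f_i(d) = f_j(d)$ whenever $P_i$ and $P_j$ share a diagonal $d$, and let $f : \operatorname{diag}(P) \to K$ be the unique weak frieze with respect to $D$ with $f|_{\operatorname{diag}(P_i)} = f_i$ for all $i$. Then $f$ is a frieze if and only if each $f_i$ is a frieze.
   Context: A semifield is a set $K$ with binary operations $+$ and $\cdot$ such that $+$ is associative and commutative, $(K,\cdot)$ is a commutative group, and $\cdot$ distributes over $+$; no subtraction is assumed. A polygon is a finite set $V$ of at least three vertices with a cyclic order. A diagonal is a two-element subset of $V$ (edges $\{\alpha,\alpha^+\}$ count as diagonals); $\operatorname{diag}(P)$ is the set of diagonals; non-edges are internal. $\{\alpha,\beta\}$ and $\{\gamma,\delta\}$ cross if $\alpha,\beta,\gamma,\delta$ are four distinct vertices appearing in the cyclic order as $\alpha,\gamma,\beta,\delta$ or $\alpha,\delta,\beta,\gamma$. A subpolygon is a subset of $V$ of at least three vertices with the induced cyclic order. A dissection is a (possibly empty) set of pairwise non-crossing internal diagonals. Write $f(\alpha,\beta):=f(\{\alpha,\beta\})$. A map $f$ on the diagonals of a polygon with values in $K$ is a frieze if it satisfies the Ptolemy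 relation $f(\alpha,\beta)f(\gamma,\delta) = f(\alpha,\gamma)f(\beta,\delta) + f(\alpha,\delta)f(\beta,\gamma)$ for all crossing diagonals $\{\alpha,\beta\}$, $\{\gamma,\delta\}$; it is a weak frieze with respect to a dissection $D$ if the Ptolemy relation holds whenever $\{\alpha,\beta\}$, $\{\gamma,\delta\}$ cross and $\{\gamma,\delta\}\in D$. (Existence and uniqueness of $f$ is known.) *)

theory Defs
  imports Main
begin

text \<open>Semifield: + associative and commutative, (K,*) a commutative group,
  * distributes over +. No zero, no subtraction.\<close>
class semifield = comm_semiring + comm_monoid_mult + inverse +
  assumes semifield_right_inverse: "a * inverse a = 1"

text \<open>Polygons: a finite set of natural numbers with at least three elements;
  its cyclic order is the one induced by the natural order on nat
  (every finite cyclic order is isomorphic to such a one).  Subpolygons are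
  subsets with the induced cyclic order, so they are again of this form.\<close>

definition polygon :: "nat set \<Rightarrow> bool" where
  "polygon V \<longleftrightarrow> finite V \<and> 3 \<le> card V"

definition diag :: "nat set \<Rightarrow> nat set set" where
  "diag V = {e. \<exists>a b. a \<in> V \<and> b \<in> V \<and> a \<noteq> b \<and> e = {a, b}}"

definition is_edge :: "nat set \<Rightarrow> nat set \<Rightarrow> bool" where
  "is_edge V e \<longleftrightarrow> (\<exists>a b. a \<in> V \<and> b \<in> V \<and> a < b \<and> e = {a, b} \<and>
      ((\<forall>x\<in>V. \<not> (a < x \<and> x < b)) \<or> (a = Min V \<and> b = Max V)))"

definition internal_diag :: "nat set \<Rightarrow> nat set set" where
  "internal_diag V = {e \<in> diag V. \<not> is_edge V e}"

definition crosses :: "nat set \<Rightarrow> nat set \<Rightarrow> bool" where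
  "crosses e1 e2 \<longleftrightarrow>
     (\<exists>a b c d. e1 = {a, b} \<and> e2 = {c, d} \<and> a < c \<and> c < b \<and> b < d) \<or>
     (\<exists>a b c d. e2 = {a, b} \<and> e1 = {c, d} \<and> a < c \<and> c < b \<and> b < d)"

definition dissection :: "nat set \<Rightarrow> nat set set \<Rightarrow> bool" where
  "dissection V D \<longleftrightarrow> D \<subseteq> internal_diag V \<and> (\<forall>e1\<in>D. \<forall>e2\<in>D. \<not> crosses e1 e2)"

definition ptolemy :: "(nat set \<Rightarrow> 'k::{plus,times}) \<Rightarrow> nat \<Rightarrow> nat \<Rightarrow> nat \<Rightarrow> nat \<Rightarrow> bool" where
  "ptolemy f a b c d \<longleftrightarrow> f {a, b} * f {c, d} = f {a, c} * f {b, d} + f {a, d} * f {b, c}"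

definition frieze :: "nat set \<Rightarrow> (nat set \<Rightarrow> 'k::semifield) \<Rightarrow> bool" where
  "frieze V f \<longleftrightarrow> (\<forall>a b c d. a \<in> V \<longrightarrow> b \<in> V \<longrightarrow> c \<in> V \<longrightarrow> d \<in> V \<longrightarrow>
      crosses {a, b} {c, d} \<longrightarrow> ptolemy f a b c d)"

definition weak_frieze :: "nat set \<Rightarrow> nat set set \<Rightarrow> (nat set \<Rightarrow> 'k::semifield) \<Rightarrow> bool" where
  "weak_frieze V D f \<longleftrightarrow> (\<forall>a b c d. a \<in> V \<longrightarrow> b \<in> V \<longrightarrow> c \<in> V \<longrightarrow> d \<in> V \<longrightarrow>
      crosses {a, b} {c, d} \<longrightarrow> {c, d} \<in> D \<longrightarrow> ptolemy f a b c d)"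

text \<open>The subpolygons into which a dissection E divides V: subpolygons Q all of whose
  edges are edges of V or lie in E, and which contain no diagonal of E as an internal diagonal.\<close>
definition cells :: "nat set \<Rightarrow> nat set set \<Rightarrow> nat set set" where
  "cells V E = {Q. Q \<subseteq> V \<and> 3 \<le> card Q \<and> (\<forall>e. is_edge Q e \<longrightarrow> is_edge V e \<or> e \<in> E) \<and>
      (\<forall>e\<in>E. e \<notin> internal_diag Q)}"

end

theory Submission
  imports Defs
begin


lemma crosses_iff:
  "crosses {a,b} {c,d} \<longleftrightarrow>
   (a<c\<and>c<b\<and>b<d) \<or> (b<c\<and>c<a\<and>a<d) \<or> (a<d\<and>d<b\<and>b<c) \<or> (b<d\<and>d<a\<and>a<c) \<or>
   (c<a\<and>a<d\<and>d<b) \<or> (d<a\<and>a<c\<and>c<b) \<or> (c<b\<and>b<d\<and>d<a) \<or> (d<b\<and>b<c\<and>c<a)"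
  unfolding crosses_def doubleton_eq_iff by (auto; blast)

lemma fsym: "f {a,b} = f {b,a}" by (simp add: insert_commute)

lemma ptolemy_sym1: "ptolemy f a b c d \<longleftrightarrow> ptolemy f b a c d"
  for f :: "nat set \<Rightarrow> 'k::semifield"
  unfolding ptolemy_def by (auto simp add: insert_commute ac_simps)
lemma ptolemy_sym2: "ptolemy f a b c d \<longleftrightarrow> ptolemy f a b d c"
  for f :: "nat set \<Rightarrow> 'k::semifield"
  unfolding ptolemy_def by (simp add: insert_commute add.commute)
lemma ptolemy_sym3: "ptolemy f a b c d \<longleftrightarrow> ptolemy f c d a b"
  for f :: "nat set \<Rightarrow> 'k::semifield"
  unfolding ptolemy_def by (auto simp add: insert_commute add.commute mult.commute)

lemma sf_cancel: "x * k = y * k \<Longrightarrow> x = (y::'k::semifield)"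
proof -
  assume h: "x * k = y * k"
  have "x = x * k * inverse k" by (simp add: mult.assoc semifield_right_inverse)
  also have "\<dots> = y * k * inverse k" using h by simp
  also have "\<dots> = y" by (simp add: mult.assoc semifield_right_inverse)
  finally show ?thesis .
qed

lemma pent:
  fixes f :: "nat set \<Rightarrow> 'k::semifield"
  assumes R1: "ptolemy f v1 v3 v2 v4" and R3: "ptolemy f v3 v5 v4 v1" and R4: "ptolemy f v4 v1 v5 v2"
  shows "ptolemy f v5 v2 v1 v3" and "ptolemy f v2 v4 v3 v5"
proof -
  define x12 where "x12 = f{v1,v2}"
  define x13 where "x13 = f{v1,v3}"
  define x14 where "x14 = f{v1,v4}"
  define x15 where "x15 = f{v1,v5}"
  define x23 where "x23 = f{v2,v3}"
  define x24 where "x24 = f{v2,v4}"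
  define x25 where "x25 = f{v2,v5}"
  define x34 where "x34 = f{v3,v4}"
  define x35 where "x35 = f{v3,v5}"
  define x45 where "x45 = f{v4,v5}"
  note defs = x12_def x13_def x14_def x15_def x23_def x24_def x25_def x34_def x35_def x45_def
  have r1: "x13*x24 = x12*x34 + x14*x23" using R1 unfolding ptolemy_def defs by (simp add: insert_commute)
  have r3: "x14*x35 = x34*x15 + x13*x45" using R3 unfolding ptolemy_def defs by (simp add: insert_commute mult.commute)
  have r4: "x14*x25 = x45*x12 + x24*x15" using R4 unfolding ptolemy_def defs by (simp add: insert_commute)
  have "x25*x13*x14 = (x15*x23 + x35*x12)*x14"
  proof -
    have "x25*x13*x14 = x13*(x14*x25)" by (simp add: ac_simps)
    also have "\<dots> = x12*x13*x45 + x15*(x13*x24)" unfolding r4 by (simp add: algebra_simps)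
    also have "\<dots> = x12*x13*x45 + x15*(x12*x34 + x14*x23)" unfolding r1 ..
    also have "\<dots> = x14*x15*x23 + x12*(x34*x15 + x13*x45)" by (simp add: algebra_simps)
    also have "\<dots> = x14*x15*x23 + x12*(x14*x35)" unfolding r3 ..
    also have "\<dots> = (x15*x23 + x35*x12)*x14" by (simp add: algebra_simps)
    finally show ?thesis .
  qed
  hence "x25*x13 = x15*x23 + x35*x12" by (rule sf_cancel)
  thus "ptolemy f v5 v2 v1 v3" unfolding ptolemy_def defs by (simp add: insert_commute)
  have "x24*x35*x14 = (x23*x45 + x25*x34)*x14"
  proof -
    have "x24*x35*x14 = x24*(x14*x35)" by (simp add: ac_simps)
    also have "\<dots> = x24*(x34*x15 + x13*x45)" unfolding r3 ..
    also have "\<dots> = x15*x24*x34 + x45*(x13*x24)" by (simp add: algebra_simps)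
    also have "\<dots> = x15*x24*x34 + x45*(x12*x34 + x14*x23)" unfolding r1 ..
    also have "\<dots> = x14*x23*x45 + x34*(x45*x12 + x24*x15)" by (simp add: algebra_simps)
    also have "\<dots> = x14*x23*x45 + x34*(x14*x25)" unfolding r4 ..
    also have "\<dots> = (x23*x45 + x25*x34)*x14" by (simp add: algebra_simps)
    finally show ?thesis .
  qed
  hence "x24*x35 = x23*x45 + x25*x34" by (rule sf_cancel)
  thus "ptolemy f v2 v4 v3 v5" unfolding ptolemy_def defs by (simp add: insert_commute)
qed

lemma c2_1:
  fixes f :: "nat set \<Rightarrow> 'k::semifield"
  assumes pq: "p<q" "p\<in>V" "q\<in>V"
   and F1: "frieze {x\<in>V. p\<le>x \<and> x\<le>q} f"
   and DX: "\<forall>a b. a\<in>V \<longrightarrow> b\<in>V \<longrightarrow> crosses {a,b} {p,q} \<longrightarrow> ptolemy f a b p q"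
  shows "a\<in>V \<Longrightarrow> b\<in>V \<Longrightarrow> c\<in>V \<Longrightarrow> e\<in>V \<Longrightarrow> crosses {a,b} {c,e} \<Longrightarrow>
     p\<le>c \<Longrightarrow> c\<le>q \<Longrightarrow> p\<le>e \<Longrightarrow> e\<le>q \<Longrightarrow> ptolemy f a b c e"
proof -
  have F1': "ptolemy f a b c e" if "a\<in>V" "b\<in>V" "c\<in>V" "e\<in>V" "crosses {a,b} {c,e}"
     "p\<le>a" "a\<le>q" "p\<le>b" "b\<le>q" "p\<le>c" "c\<le>q" "p\<le>e" "e\<le>q" for a b c e
    using F1 that unfolding frieze_def by blast
  have DX': "ptolemy f a b p q" if "a\<in>V" "b\<in>V" "crosses {a,b} {p,q}" for a b
    using DX that by blast
  have P2: "ptolemy f a b c e" if h: "a\<in>V" "b\<in>V" "c\<in>V" "e\<in>V" "p<a" "a<q" "b<p \<or> q<b"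
     "p\<le>c" "c<a" "a<e" "e\<le>q" "c=p \<or> e=q" for a b c e
  proof -
    consider "c=p" "e=q" | "c=p" "e<q" | "p<c" "e=q" using h by linarith
    then show ?thesis
    proof cases
      case 1 thus ?thesis using DX'[of a b] h by (simp add: crosses_iff) arith
    next
      case 2
      have R1: "ptolemy f p e a q" using F1'[of p e a q] h 2 pq by (simp add: crosses_iff)
      have "crosses {e,b} {p,q}" using h 2 pq by (simp add: crosses_iff) arith
      hence "ptolemy f e b p q" using DX' h by simp
      hence R3: "ptolemy f e b q p" using ptolemy_sym2 by metis
      have "crosses {a,b} {p,q}" using h 2 pq by (simp add: crosses_iff) arith
      hence "ptolemy f a b p q" using DX' h by simp
      hence R4: "ptolemy f q p b a" using ptolemy_sym1 ptolemy_sym2 ptolemy_sym3 by metis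
      have "ptolemy f b a p e" using pent(1)[OF R1 R3 R4] .
      thus ?thesis using 2 ptolemy_sym1 by metis
    next
      case 3
      have R1: "ptolemy f p a c q" using F1'[of p a c q] h 3 pq by (simp add: crosses_iff)
      have "crosses {a,b} {p,q}" using h 3 pq by (simp add: crosses_iff) arith
      hence "ptolemy f a b p q" using DX' h by simp
      hence R3: "ptolemy f a b q p" using ptolemy_sym2 by metis
      have "crosses {c,b} {p,q}" using h 3 pq by (simp add: crosses_iff) arith
      hence "ptolemy f c b p q" using DX' h by simp
      hence R4: "ptolemy f q p b c" using ptolemy_sym1 ptolemy_sym2 ptolemy_sym3 by metis
      have "ptolemy f c q a b" using pent(2)[OF R1 R3 R4] .
      thus ?thesis using 3 ptolemy_sym3 by metis
    qed
  qed
  have P3: "ptolemy f a b c e" if h: "a\<in>V" "b\<in>V" "c\<in>V" "e\<in>V" "p<a" "a<q" "b<p \<or> q<b"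
     "p\<le>c" "c<a" "a<e" "e\<le>q" for a b c e
  proof (cases "c=p \<or> e=q")
    case True thus ?thesis using P2 h by blast
  next
    case False
    have R1: "ptolemy f c e a q" using F1'[of c e a q] h False pq by (simp add: crosses_iff)
    have "ptolemy f e b c q" using P2[of e b c q] h False pq by simp
    hence R3: "ptolemy f e b q c" using ptolemy_sym2 by metis
    have "ptolemy f a b c q" using P2[of a b c q] h False pq by simp
    hence R4: "ptolemy f q c b a" using ptolemy_sym1 ptolemy_sym2 ptolemy_sym3 by metis
    have "ptolemy f b a c e" using pent(1)[OF R1 R3 R4] .
    thus ?thesis using ptolemy_sym1 by metis
  qed
  assume h: "a\<in>V" "b\<in>V" "c\<in>V" "e\<in>V" "crosses {a,b} {c,e}" "p\<le>c" "c\<le>q" "p\<le>e" "e\<le>q"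
  have "(p\<le>a \<and> a\<le>q \<and> p\<le>b \<and> b\<le>q) \<or>
        (p<a \<and> a<q \<and> (b<p \<or> q<b) \<and> ((c<a \<and> a<e) \<or> (e<a \<and> a<c))) \<or>
        (p<b \<and> b<q \<and> (a<p \<or> q<a) \<and> ((c<b \<and> b<e) \<or> (e<b \<and> b<c)))"
    using h(5-) unfolding crosses_iff by arith
  then consider "p\<le>a \<and> a\<le>q \<and> p\<le>b \<and> b\<le>q" 
    | "p<a" "a<q" "b<p \<or> q<b" "c<a" "a<e" | "p<a" "a<q" "b<p \<or> q<b" "e<a" "a<c"
    | "p<b" "b<q" "a<p \<or> q<a" "c<b" "b<e" | "p<b" "b<q" "a<p \<or> q<a" "e<b" "b<c" by blast
  then show "ptolemy f a b c e"
  proof cases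
    case 1 thus ?thesis using F1' h by blast
  next
    case 2 thus ?thesis using P3[of a b c e] h by simp
  next
    case 3 thus ?thesis using P3[of a b e c] h ptolemy_sym2 by metis
  next
    case 4 thus ?thesis using P3[of b a c e] h ptolemy_sym1 by metis
  next
    case 5 thus ?thesis using P3[of b a e c] h ptolemy_sym1 ptolemy_sym2 by metis
  qed
qed

lemma rot_crosses:
  fixes a b c e q M :: nat
  assumes "a < M" "b < M" "c < M" "e < M" "q < M"
  defines "r \<equiv> \<lambda>x. if q \<le> x then x else x + M"
  shows "crosses {r a, r b} {r c, r e} \<longleftrightarrow> crosses {a,b} {c,e}"
  using assms(1-5) unfolding crosses_iff r_def by (auto split: if_splits)

lemma c2_2:
  fixes f :: "nat set \<Rightarrow> 'k::semifield"
  assumes fin: "finite V" and pq: "p<q" "p\<in>V" "q\<in>V"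
   and F2: "frieze {x\<in>V. x\<le>p \<or> q\<le>x} f"
   and DX: "\<forall>a b. a\<in>V \<longrightarrow> b\<in>V \<longrightarrow> crosses {a,b} {p,q} \<longrightarrow> ptolemy f a b p q"
  shows "a\<in>V \<Longrightarrow> b\<in>V \<Longrightarrow> c\<in>V \<Longrightarrow> e\<in>V \<Longrightarrow> crosses {a,b} {c,e} \<Longrightarrow>
     (c\<le>p \<or> q\<le>c) \<Longrightarrow> (e\<le>p \<or> q\<le>e) \<Longrightarrow> ptolemy f a b c e"
proof -
  define M where "M = Suc (Max V)"
  have ltM: "x < M" if "x \<in> V" for x using fin that unfolding M_def by (simp add: le_imp_less_Suc)
  define r where "r = (\<lambda>x::nat. if q \<le> x then x else x + M)"
  define r' where "r' = (\<lambda>y::nat. if M \<le> y then y - M else y)"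
  define f' where "f' = (\<lambda>S. f (r' ` S))"
  have rr: "r' (r x) = x" if "x \<in> V" for x using ltM[OF that] pq ltM[OF pq(3)] unfolding r_def r'_def by auto
  have pt: "ptolemy f' (r a) (r b) (r c) (r e) \<longleftrightarrow> ptolemy f a b c e"
    if "a\<in>V" "b\<in>V" "c\<in>V" "e\<in>V" for a b c e
    unfolding ptolemy_def f'_def using that by (simp add: rr)
  have cr: "crosses {r a, r b} {r c, r e} \<longleftrightarrow> crosses {a,b} {c,e}"
    if "a\<in>V" "b\<in>V" "c\<in>V" "e\<in>V" for a b c e
    unfolding r_def using rot_crosses[of a M b c e q] that ltM pq by simp
  have rp: "r p = p + M" "r q = q" using pq unfolding r_def by auto
  have qM: "q < p + M" using ltM[OF pq(3)] by simp
  have mem: "q \<le> r x \<and> r x \<le> p + M \<longleftrightarrow> (x\<le>p \<or> q\<le>x)" if "x\<in>V" for x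
    using ltM[OF that] ltM[OF pq(3)] pq unfolding r_def by auto
  have C: "ptolemy f' a b c e" if "a\<in>r`V" "b\<in>r`V" "c\<in>r`V" "e\<in>r`V" "crosses {a,b} {c,e}"
     "q\<le>c" "c\<le>p+M" "q\<le>e" "e\<le>p+M" for a b c e
  proof (rule c2_1[of q "p+M" "r`V" f' a b c e])
    show "q < p+M" by (rule qM)
    show "q \<in> r`V" using rp pq by (metis image_eqI)
    show "p+M \<in> r`V" using rp pq by (metis image_eqI)
    show "frieze {x \<in> r ` V. q \<le> x \<and> x \<le> p + M} f'"
      unfolding frieze_def
    proof (intro allI impI)
      fix a b c e assume h: "a \<in> {x \<in> r ` V. q \<le> x \<and> x \<le> p + M}" "b \<in> {x \<in> r ` V. q \<le> x \<and> x \<le> p + M}"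
        "c \<in> {x \<in> r ` V. q \<le> x \<and> x \<le> p + M}" "e \<in> {x \<in> r ` V. q \<le> x \<and> x \<le> p + M}"
        "crosses {a,b} {c,e}"
      then obtain a0 b0 c0 e0 where z: "a0\<in>V" "b0\<in>V" "c0\<in>V" "e0\<in>V" "a = r a0" "b = r b0" "c = r c0" "e = r e0"
        by blast
      have "ptolemy f a0 b0 c0 e0" using F2 h z mem cr unfolding frieze_def by auto
      thus "ptolemy f' a b c e" using pt z by simp
    qed
    show "\<forall>a b. a \<in> r ` V \<longrightarrow> b \<in> r ` V \<longrightarrow> crosses {a, b} {q, p + M} \<longrightarrow> ptolemy f' a b q (p + M)"
    proof (intro allI impI)
      fix a b assume h: "a \<in> r ` V" "b \<in> r ` V" "crosses {a, b} {q, p + M}"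
      then obtain a0 b0 where z: "a0\<in>V" "b0\<in>V" "a = r a0" "b = r b0" by blast
      have "crosses {a0,b0} {q,p}" using cr[of a0 b0 q p] h z rp pq by simp
      hence "crosses {a0,b0} {p,q}" by (simp add: insert_commute)
      hence "ptolemy f a0 b0 p q" using DX z by blast
      hence "ptolemy f' a b p' q'" if "p' = r p" "q' = r q" for p' q' using pt z pq that by simp
      hence "ptolemy f' a b (p+M) q" using rp by simp
      thus "ptolemy f' a b q (p + M)" using ptolemy_sym2 by metis
    qed
  qed (use that in auto)
  assume h: "a\<in>V" "b\<in>V" "c\<in>V" "e\<in>V" "crosses {a,b} {c,e}" "c\<le>p \<or> q\<le>c" "e\<le>p \<or> q\<le>e"
  have "ptolemy f' (r a) (r b) (r c) (r e)"
    using C[of "r a" "r b" "r c" "r e"] h mem cr by auto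
  thus "ptolemy f a b c e" using pt h by simp
qed

lemma crosses_sym: "crosses x y \<longleftrightarrow> crosses y x"
  unfolding crosses_def by blast

lemma glue:
  fixes f :: "nat set \<Rightarrow> 'k::semifield"
  assumes fin: "finite V" and pq: "p<q" "p\<in>V" "q\<in>V"
   and F1: "frieze {x\<in>V. p\<le>x \<and> x\<le>q} f"
   and F2: "frieze {x\<in>V. x\<le>p \<or> q\<le>x} f"
   and DX: "\<forall>a b. a\<in>V \<longrightarrow> b\<in>V \<longrightarrow> crosses {a,b} {p,q} \<longrightarrow> ptolemy f a b p q"
  shows "frieze V f"
proof -
  note C1 = c2_1[OF pq F1 DX]
  note C2 = c2_2[OF fin pq F2 DX]
  have K0: "ptolemy f a b c e" if h: "a\<in>V" "b\<in>V" "c\<in>V" "e\<in>V" "crosses {a,b} {c,e}"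
    "p<a" "a<q" "b<p \<or> q<b" "p<c" "c<q" "e<p \<or> q<e" "a<c" for a b c e
  proof -
    have "crosses {a,b} {p,c}" using h unfolding crosses_iff by auto
    hence "ptolemy f a b p c" using C1 h pq by simp
    hence R1: "ptolemy f p c a b" using ptolemy_sym3 by metis
    have cr3: "crosses {c,e} {b,p}" using h unfolding crosses_iff by auto
    have bb: "b \<le> p \<or> q \<le> b" using h by auto
    have R3: "ptolemy f c e b p" using C2[OF h(3) h(4) h(2) pq(2) cr3 bb disjI1[OF order_refl]] .
    have cr4: "crosses {a,e} {b,p}" using h unfolding crosses_iff by auto
    have "ptolemy f a e b p" using C2[OF h(1) h(4) h(2) pq(2) cr4 bb disjI1[OF order_refl]] .
    hence R4: "ptolemy f b p e a" using ptolemy_sym3 ptolemy_sym2 by metis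
    show ?thesis using pent(2)[OF R1 R3 R4] .
  qed
  have K: "ptolemy f a b c e" if h: "a\<in>V" "b\<in>V" "c\<in>V" "e\<in>V" "crosses {a,b} {c,e}"
    "p<a" "a<q" "b<p \<or> q<b" "p<c" "c<q" "e<p \<or> q<e" for a b c e
  proof (cases "a < c")
    case True thus ?thesis using K0 h by blast
  next
    case False
    hence "c < a" using h(5) unfolding crosses_iff by auto
    moreover have "crosses {c,e} {a,b}" using h(5) crosses_sym by blast
    ultimately have "ptolemy f c e a b" using K0 h by blast
    thus ?thesis using ptolemy_sym3 by metis
  qed
  show ?thesis unfolding frieze_def
  proof (intro allI impI)
    fix a b c e assume h: "a\<in>V" "b\<in>V" "c\<in>V" "e\<in>V" "crosses {a,b} {c,e}"
    have hs: "crosses {c,e} {a,b}" using h(5) crosses_sym by blast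
    show "ptolemy f a b c e"
    proof (cases "p\<le>c \<and> c\<le>q \<and> p\<le>e \<and> e\<le>q")
      case True thus ?thesis using C1 h by blast
    next
      case nc1: False
      show ?thesis
      proof (cases "(c\<le>p \<or> q\<le>c) \<and> (e\<le>p \<or> q\<le>e)")
        case True thus ?thesis using C2 h by blast
      next
        case nc2: False
        show ?thesis
        proof (cases "p\<le>a \<and> a\<le>q \<and> p\<le>b \<and> b\<le>q")
          case True thus ?thesis using C1[of c e a b] h hs ptolemy_sym3 by metis
        next
          case na1: False
          show ?thesis
          proof (cases "(a\<le>p \<or> q\<le>a) \<and> (b\<le>p \<or> q\<le>b)")
            case True thus ?thesis using C2[of c e a b] h hs ptolemy_sym3 by metis
          next
            case na2: False
            have ab: "(p<a \<and> a<q \<and> (b<p \<or> q<b)) \<or> (p<b \<and> b<q \<and> (a<p \<or> q<a))"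
              using na1 na2 by auto
            have ce: "(p<c \<and> c<q \<and> (e<p \<or> q<e)) \<or> (p<e \<and> e<q \<and> (c<p \<or> q<c))"
              using nc1 nc2 by auto
            have hb: "crosses {b,a} {c,e}" "crosses {a,b} {e,c}" "crosses {b,a} {e,c}"
              using h(5) by (simp_all add: insert_commute)
            from ab show ?thesis
            proof (elim disjE)
              assume A: "p<a \<and> a<q \<and> (b<p \<or> q<b)"
              from ce show ?thesis
              proof (elim disjE)
                assume "p<c \<and> c<q \<and> (e<p \<or> q<e)"
                thus ?thesis using K h A by blast
              next
                assume "p<e \<and> e<q \<and> (c<p \<or> q<c)"
                hence "ptolemy f a b e c" using K[of a b e c] h A hb by blast
                thus ?thesis using ptolemy_sym2 by metis
              qed
            next
              assume A: "p<b \<and> b<q \<and> (a<p \<or> q<a)"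
              from ce show ?thesis
              proof (elim disjE)
                assume "p<c \<and> c<q \<and> (e<p \<or> q<e)"
                hence "ptolemy f b a c e" using K[of b a c e] h A hb by blast
                thus ?thesis using ptolemy_sym1 by metis
              next
                assume "p<e \<and> e<q \<and> (c<p \<or> q<c)"
                hence "ptolemy f b a e c" using K[of b a e c] h A hb by blast
                thus ?thesis using ptolemy_sym1 ptolemy_sym2 by metis
              qed
            qed
          qed
        qed
      qed
    qed
  qed
qed



lemma edge_V1:
  assumes fin: "finite V" and pq: "p<q" "p\<in>V" "q\<in>V"
    and e: "is_edge {x\<in>V. p\<le>x \<and> x\<le>q} e"
  shows "is_edge V e \<or> e = {p,q}"
proof -
  let ?V1 = "{x\<in>V. p\<le>x \<and> x\<le>q}"
  have mn: "Min ?V1 = p" by (rule Min_eqI) (use fin pq in auto)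
  have mx: "Max ?V1 = q" by (rule Max_eqI) (use fin pq in auto)
  obtain a b where ab: "a\<in>?V1" "b\<in>?V1" "a<b" "e={a,b}"
    "(\<forall>x\<in>?V1. \<not> (a < x \<and> x < b)) \<or> (a = Min ?V1 \<and> b = Max ?V1)"
    using e unfolding is_edge_def by blast
  from ab(5) show ?thesis
  proof
    assume "\<forall>x\<in>?V1. \<not> (a < x \<and> x < b)"
    hence "\<forall>x\<in>V. \<not> (a < x \<and> x < b)" using ab by force
    thus ?thesis using ab unfolding is_edge_def by blast
  next
    assume "a = Min ?V1 \<and> b = Max ?V1" thus ?thesis using ab mn mx by simp
  qed
qed

lemma edge_V2:
  assumes fin: "finite V" and pq: "p<q" "p\<in>V" "q\<in>V"
    and e: "is_edge {x\<in>V. x\<le>p \<or> q\<le>x} e"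
  shows "is_edge V e \<or> e = {p,q}"
proof -
  let ?V2 = "{x\<in>V. x\<le>p \<or> q\<le>x}"
  have ne: "V \<noteq> {}" using pq by auto
  have mn: "Min ?V2 = Min V"
  proof (rule Min_eqI)
    show "finite ?V2" using fin by simp
    show "Min V \<in> ?V2" using fin ne pq Min_in[OF fin ne] Min_le[OF fin pq(2)] by simp
  qed (use fin in auto)
  have mx: "Max ?V2 = Max V"
  proof (rule Max_eqI)
    show "finite ?V2" using fin by simp
    show "Max V \<in> ?V2" using fin ne pq Max_in[OF fin ne] Max_ge[OF fin pq(3)] by simp
  qed (use fin in auto)
  obtain a b where ab: "a\<in>?V2" "b\<in>?V2" "a<b" "e={a,b}"
    "(\<forall>x\<in>?V2. \<not> (a < x \<and> x < b)) \<or> (a = Min ?V2 \<and> b = Max ?V2)"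
    using e unfolding is_edge_def by blast
  from ab(5) show ?thesis
  proof
    assume nb: "\<forall>x\<in>?V2. \<not> (a < x \<and> x < b)"
    show ?thesis
    proof (cases "\<exists>x\<in>V. a < x \<and> x < b")
      case True
      then obtain x where x: "x\<in>V" "a<x" "x<b" by blast
      have "a = p" using nb ab x pq by (metis (mono_tags, lifting) linorder_not_le mem_Collect_eq order.strict_trans order_le_less)
      moreover have "b = q" using nb ab x pq by (metis (mono_tags, lifting) linorder_not_le mem_Collect_eq order.strict_trans order_le_less)
      ultimately show ?thesis using ab by simp
    next
      case False thus ?thesis using ab unfolding is_edge_def by blast
    qed
  next
    assume "a = Min ?V2 \<and> b = Max ?V2" thus ?thesis using ab mn mx unfolding is_edge_def by blast
  qed
qed


lemma card3: "a\<noteq>b \<Longrightarrow> a\<noteq>c \<Longrightarrow> b\<noteq>c \<Longrightarrow> {a,b,c} \<subseteq> S \<Longrightarrow> finite S \<Longrightarrow> 3 \<le> card S"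
  by (metis card_3_iff card_mono)

lemma main_ind:
  fixes f :: "nat set \<Rightarrow> 'k::semifield"
  shows "card E = n \<Longrightarrow> finite V \<Longrightarrow> 3 \<le> card V \<Longrightarrow> dissection V E \<Longrightarrow>
    (\<forall>Q\<in>cells V E. frieze Q f) \<Longrightarrow>
    (\<forall>a b c d. a\<in>V \<longrightarrow> b\<in>V \<longrightarrow> c\<in>V \<longrightarrow> d\<in>V \<longrightarrow> crosses {a,b} {c,d} \<longrightarrow> {c,d}\<in>E \<longrightarrow> ptolemy f a b c d)
    \<Longrightarrow> frieze V f"
proof (induction n arbitrary: V E rule: less_induct)
  case (less n V E)
  note fin = less.prems(2)
  have finE: "finite E"
  proof (rule finite_subset)
    show "E \<subseteq> Pow V" using less.prems(4) unfolding dissection_def internal_diag_def diag_def by auto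
  qed (use fin in simp)
  show ?case
  proof (cases "E = {}")
    case True
    have "V \<in> cells V E" using True less.prems(3) unfolding cells_def by simp
    thus ?thesis using less.prems(5) by blast
  next
    case False
    then obtain d where dE: "d \<in> E" by blast
    hence "d \<in> internal_diag V" using less.prems(4) unfolding dissection_def by blast
    then obtain p q where pq: "p<q" "p\<in>V" "q\<in>V" "d = {p,q}" and ne: "\<not> is_edge V {p,q}"
      unfolding internal_diag_def diag_def
      by (auto, metis insert_commute linorder_neqE_nat)
    define V1 where "V1 = {x\<in>V. p\<le>x \<and> x\<le>q}"
    define V2 where "V2 = {x\<in>V. x\<le>p \<or> q\<le>x}"
    define E1 where "E1 = {e\<in>E. e \<subseteq> V1} - {d}"
    define E2 where "E2 = {e\<in>E. e \<subseteq> V2} - {d}"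
    obtain x where x: "x\<in>V" "p<x" "x<q" using ne pq unfolding is_edge_def by blast
    have "\<not> (p = Min V \<and> q = Max V)" using ne pq unfolding is_edge_def by blast
    then obtain y where y: "y\<in>V" "y<p \<or> q<y" using pq fin
      by (metis Max_eqI Min_eqI linorder_not_le)
    have finV1: "finite V1" "finite V2" using fin unfolding V1_def V2_def by auto
    have c1: "3 \<le> card V1" by (rule card3[of p x q]) (use pq x finV1 in \<open>auto simp: V1_def\<close>)
    have c2: "3 \<le> card V2" by (rule card3[of p y q]) (use pq y finV1 in \<open>auto simp: V2_def\<close>)
    have lt1: "card E1 < n" unfolding E1_def less.prems(1)[symmetric]
      by (rule psubset_card_mono) (use finE dE in auto)
    have lt2: "card E2 < n" unfolding E2_def less.prems(1)[symmetric]
      by (rule psubset_card_mono) (use finE dE in auto)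
    have Eint: "e \<in> internal_diag V" "\<forall>e'\<in>E. \<not> crosses e e'" if "e\<in>E" for e
      using less.prems(4) that unfolding dissection_def by auto
    have diagsub: "e \<in> diag W" if "e \<in> diag V" "e \<subseteq> W" for e W
      using that unfolding diag_def by auto
    have e1: "is_edge V e \<or> e = d" if "is_edge V1 e" for e
      using edge_V1[OF fin pq(1-3)] that pq(4) unfolding V1_def by blast
    have e2: "is_edge V e \<or> e = d" if "is_edge V2 e" for e
      using edge_V2[OF fin pq(1-3)] that pq(4) unfolding V2_def by blast
    have dis1: "dissection V1 E1"
      unfolding dissection_def
    proof (intro conjI ballI subsetI)
      fix e assume "e \<in> E1"
      hence h: "e\<in>E" "e\<subseteq>V1" "e\<noteq>d" unfolding E1_def by auto
      show "e \<in> internal_diag V1" using Eint(1)[OF h(1)] h e1 diagsub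
        unfolding internal_diag_def by blast
    next
      fix e1 e2 assume "e1 \<in> E1" "e2 \<in> E1" thus "\<not> crosses e1 e2" using Eint(2) unfolding E1_def by blast
    qed
    have dis2: "dissection V2 E2"
      unfolding dissection_def
    proof (intro conjI ballI subsetI)
      fix e assume "e \<in> E2"
      hence h: "e\<in>E" "e\<subseteq>V2" "e\<noteq>d" unfolding E2_def by auto
      show "e \<in> internal_diag V2" using Eint(1)[OF h(1)] h e2 diagsub
        unfolding internal_diag_def by blast
    next
      fix e1 e2 assume "e1 \<in> E2" "e2 \<in> E2" thus "\<not> crosses e1 e2" using Eint(2) unfolding E2_def by blast
    qed
    have dQ1: "is_edge Q d" if "Q \<subseteq> V1" "p \<in> Q" "q \<in> Q" for Q
    proof -
      have fQ: "finite Q" using that finV1 finite_subset by blast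
      have "Min Q = p" by (rule Min_eqI) (use that fQ in \<open>auto simp: V1_def\<close>)
      moreover have "Max Q = q" by (rule Max_eqI) (use that fQ in \<open>auto simp: V1_def\<close>)
      ultimately show ?thesis unfolding is_edge_def using that pq by blast
    qed
    have dQ2: "is_edge Q d" if "Q \<subseteq> V2" "p \<in> Q" "q \<in> Q" for Q
    proof -
      have "\<forall>x\<in>Q. \<not> (p < x \<and> x < q)" using that unfolding V2_def by auto
      thus ?thesis unfolding is_edge_def using that pq by blast
    qed
    have cells1: "cells V1 E1 \<subseteq> cells V E"
    proof
      fix Q assume Q: "Q \<in> cells V1 E1"
      hence QV: "Q \<subseteq> V1" "3 \<le> card Q" "\<forall>e. is_edge Q e \<longrightarrow> is_edge V1 e \<or> e \<in> E1"
        "\<forall>e\<in>E1. e \<notin> internal_diag Q" unfolding cells_def by auto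
      have "e \<notin> internal_diag Q" if "e \<in> E" for e
      proof (cases "e = d")
        case True
        show ?thesis
        proof
          assume "e \<in> internal_diag Q"
          hence "d \<subseteq> Q" "\<not> is_edge Q d" using True unfolding internal_diag_def diag_def by auto
          thus False using dQ1 QV pq by auto
        qed
      next
        case False
        show ?thesis
        proof (cases "e \<subseteq> V1")
          case True thus ?thesis using QV False that unfolding E1_def by auto
        next
          case nf: False
          thus ?thesis using QV unfolding internal_diag_def diag_def by auto
        qed
      qed
      moreover have "is_edge V e \<or> e \<in> E" if "is_edge Q e" for e
        using QV that e1 dE unfolding E1_def by blast
      moreover have "Q \<subseteq> V" using QV unfolding V1_def by auto
      ultimately show "Q \<in> cells V E" using QV unfolding cells_def by blast
    qed
    have cells2: "cells V2 E2 \<subseteq> cells V E"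
    proof
      fix Q assume Q: "Q \<in> cells V2 E2"
      hence QV: "Q \<subseteq> V2" "3 \<le> card Q" "\<forall>e. is_edge Q e \<longrightarrow> is_edge V2 e \<or> e \<in> E2"
        "\<forall>e\<in>E2. e \<notin> internal_diag Q" unfolding cells_def by auto
      have "e \<notin> internal_diag Q" if "e \<in> E" for e
      proof (cases "e = d")
        case True
        show ?thesis
        proof
          assume "e \<in> internal_diag Q"
          hence "d \<subseteq> Q" "\<not> is_edge Q d" using True unfolding internal_diag_def diag_def by auto
          thus False using dQ2 QV pq by auto
        qed
      next
        case False
        show ?thesis
        proof (cases "e \<subseteq> V2")
          case True thus ?thesis using QV False that unfolding E2_def by auto
        next
          case nf: False
          thus ?thesis using QV unfolding internal_diag_def diag_def by auto
        qed
      qed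
      moreover have "is_edge V e \<or> e \<in> E" if "is_edge Q e" for e
        using QV that e2 dE unfolding E2_def by blast
      moreover have "Q \<subseteq> V" using QV unfolding V2_def by auto
      ultimately show "Q \<in> cells V E" using QV unfolding cells_def by blast
    qed
    have fr1: "frieze V1 f"
    proof (rule less.IH[OF lt1 refl finV1(1) c1 dis1])
      show "\<forall>Q\<in>cells V1 E1. frieze Q f" using cells1 less.prems(5) by blast
      show "\<forall>a b c d. a \<in> V1 \<longrightarrow> b \<in> V1 \<longrightarrow> c \<in> V1 \<longrightarrow> d \<in> V1 \<longrightarrow> crosses {a, b} {c, d} \<longrightarrow> {c, d} \<in> E1 \<longrightarrow> ptolemy f a b c d"
        using less.prems(6) unfolding V1_def E1_def by blast
    qed
    have fr2: "frieze V2 f"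
    proof (rule less.IH[OF lt2 refl finV1(2) c2 dis2])
      show "\<forall>Q\<in>cells V2 E2. frieze Q f" using cells2 less.prems(5) by blast
      show "\<forall>a b c d. a \<in> V2 \<longrightarrow> b \<in> V2 \<longrightarrow> c \<in> V2 \<longrightarrow> d \<in> V2 \<longrightarrow> crosses {a, b} {c, d} \<longrightarrow> {c, d} \<in> E2 \<longrightarrow> ptolemy f a b c d"
        using less.prems(6) unfolding V2_def E2_def by blast
    qed
    show ?thesis
    proof (rule glue[OF fin pq(1-3)])
      show "frieze {x \<in> V. p \<le> x \<and> x \<le> q} f" using fr1 unfolding V1_def .
      show "frieze {x \<in> V. x \<le> p \<or> q \<le> x} f" using fr2 unfolding V2_def .
      show "\<forall>a b. a \<in> V \<longrightarrow> b \<in> V \<longrightarrow> crosses {a, b} {p, q} \<longrightarrow> ptolemy f a b p q"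
        using less.prems(6) dE pq by blast
    qed
  qed
qed


lemma crosses_distinct: "crosses {a,b} {c,d} \<Longrightarrow> a\<noteq>b \<and> a\<noteq>c \<and> a\<noteq>d \<and> b\<noteq>c \<and> b\<noteq>d \<and> c\<noteq>d"
  unfolding crosses_iff by auto

theorem theoremC:
  fixes V :: "nat set" and E :: "nat set set"
    and Ds :: "nat set \<Rightarrow> nat set set"
    and fs :: "nat set \<Rightarrow> nat set \<Rightarrow> 'k::semifield"
    and f :: "nat set \<Rightarrow> 'k"
  assumes "polygon V"
    and "dissection V E"
    and "\<forall>Q\<in>cells V E. dissection Q (Ds Q)"
    and "\<forall>Q\<in>cells V E. weak_frieze Q (Ds Q) (fs Q)"
    and "\<forall>Q\<in>cells V E. \<forall>Q'\<in>cells V E. \<forall>d\<in>diag Q \<inter> diag Q'. fs Q d = fs Q' d"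
    and "weak_frieze V (E \<union> \<Union>(Ds ` cells V E)) f"
    and "\<forall>Q\<in>cells V E. \<forall>d\<in>diag Q. f d = fs Q d"
  shows "frieze V f \<longleftrightarrow> (\<forall>Q\<in>cells V E. frieze Q (fs Q))"
proof -
  have fin: "finite V" and c3: "3 \<le> card V" using assms(1) unfolding polygon_def by auto
  have eq: "f {x,y} = fs Q {x,y}" if "Q \<in> cells V E" "x\<in>Q" "y\<in>Q" "x\<noteq>y" for Q x y
    using assms(7) that unfolding diag_def by blast
  have tr: "ptolemy f a b c d \<longleftrightarrow> ptolemy (fs Q) a b c d"
    if "Q \<in> cells V E" "a\<in>Q" "b\<in>Q" "c\<in>Q" "d\<in>Q" "crosses {a,b} {c,d}" for Q a b c d
    using crosses_distinct[OF that(6)] that unfolding ptolemy_def by (simp add: eq)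
  have sub: "Q \<subseteq> V" if "Q \<in> cells V E" for Q using that unfolding cells_def by auto
  show ?thesis
  proof
    assume F: "frieze V f"
    show "\<forall>Q\<in>cells V E. frieze Q (fs Q)"
    proof (intro ballI)
      fix Q assume Q: "Q \<in> cells V E"
      show "frieze Q (fs Q)" unfolding frieze_def
      proof (intro allI impI)
        fix a b c d assume h: "a\<in>Q" "b\<in>Q" "c\<in>Q" "d\<in>Q" "crosses {a,b} {c,d}"
        hence "ptolemy f a b c d" using F sub[OF Q] unfolding frieze_def by blast
        thus "ptolemy (fs Q) a b c d" using tr[OF Q h] by simp
      qed
    qed
  next
    assume G: "\<forall>Q\<in>cells V E. frieze Q (fs Q)"
    have G': "\<forall>Q\<in>cells V E. frieze Q f"
    proof (intro ballI)
      fix Q assume Q: "Q \<in> cells V E"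
      show "frieze Q f" unfolding frieze_def
      proof (intro allI impI)
        fix a b c d assume h: "a\<in>Q" "b\<in>Q" "c\<in>Q" "d\<in>Q" "crosses {a,b} {c,d}"
        hence "ptolemy (fs Q) a b c d" using G Q unfolding frieze_def by blast
        thus "ptolemy f a b c d" using tr[OF Q h] by simp
      qed
    qed
    have W: "\<forall>a b c d. a\<in>V \<longrightarrow> b\<in>V \<longrightarrow> c\<in>V \<longrightarrow> d\<in>V \<longrightarrow> crosses {a,b} {c,d} \<longrightarrow> {c,d}\<in>E \<longrightarrow> ptolemy f a b c d"
      using assms(6) unfolding weak_frieze_def by blast
    show "frieze V f" by (rule main_ind[OF refl fin c3 assms(2) G' W])
  qed
qed

end
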